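(* Consider the noiseless least squares deterministic dynamics under AdaGrad-Norm$(b,\eta)$ described in the context, in the regime $d\to\infty$. Assume that, for some $C>0$, the number of eigenvalues of $K$ below $C$ is $o(d)$, that $\langle X^\star,\omega_i\rangle=O(d^{-1/2})$ for all $i$, and that $X_0=0$. Then there exists some $\tilde\gamma>0$ such that $\gamma_t>\tilde\gamma$ for all $t>0$.
   Context: Noiseless least squares: $\mathcal R(X)=\frac12(X-X^\star)^TK(X-X^\star)$, $K\in\mathbb R^{d\times d}$ positive semidefinite with $\|K\|_{op}$ bounded independently of $d$, eigenpairs $(\lambda_i,\omega_i)$. Deterministic dynamics: $D_i^2(0)=d\langle X_0-X^\star,\omega_i\rangle^2$, $\frac{d}{dt}D_i^2(t)=-2\gamma_t\lambda_iD_i^2(t)+2\gamma_t^2\lambda_iR(t)$, $R(t)=\frac1{2d}\sum_i\lambda_iD_i^2(t)$, with AdaGrad-Norm learning rate $\gamma_t=\eta\big/\sqrt{b^2+\frac{2\mathrm{Tr}(K)}{d}\int_0^tR(s)\,ds}$, $b,\eta>0$. *)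

theory Defs
  imports "HOL-Analysis.Analysis" "Jordan_Normal_Form.Matrix"
begin

text \<open>Risk in the spectral coordinates:
  R(t) = 1/(2d) * sum_i lambda_i * D_i^2(t).  Here Dsq i t stands for D_i^2(t).\<close>
definition risk :: "nat \<Rightarrow> (nat \<Rightarrow> real) \<Rightarrow> (nat \<Rightarrow> real \<Rightarrow> real) \<Rightarrow> real \<Rightarrow> real" where
  "risk d lam Dsq t = (1 / (2 * real d)) * (\<Sum>i<d. lam i * Dsq i t)"

definition mat_trace :: "real mat \<Rightarrow> real" where
  "mat_trace A = (\<Sum>i<dim_row A. A $$ (i, i))"

definition adagrad_norm_lr :: "real \<Rightarrow> real \<Rightarrow> real \<Rightarrow> nat \<Rightarrow> (real \<Rightarrow> real) \<Rightarrow> real \<Rightarrow> real" where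
  "adagrad_norm_lr eta b trK d R t =
     eta / sqrt (b\<^sup>2 + (2 * trK / real d) * integral {0..t} R)"

end

theory Submission
  imports Defs "Jordan_Normal_Form.Determinant"
begin
no_notation vec_nth (infixl "$" 90)

lemma negsq_quad: "\<bar>(min y 0)^2 - (min x 0)^2 - 2 * min x 0 * (y - x)\<bar> \<le> (y - x)^2"
  for x y :: real
proof (cases "x \<le> 0")
  case True
  show ?thesis
  proof (cases "y \<le> 0")
    case True
    with \<open>x \<le> 0\<close> have "(min y 0)^2 - (min x 0)^2 - 2 * min x 0 * (y - x) = (y - x)^2"
      by (simp add: min_def power2_eq_square algebra_simps)
    then show ?thesis by simp
  next
    case False
    with \<open>x \<le> 0\<close> have e: "(min y 0)^2 - (min x 0)^2 - 2 * min x 0 * (y - x) = x^2 - 2*x*y"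
      by (simp add: min_def power2_eq_square algebra_simps)
    have "x*y \<le> 0" using False \<open>x \<le> 0\<close> by (simp add: mult_nonpos_nonneg)
    moreover have "0 \<le> x^2" by simp
    ultimately have "0 \<le> x^2 - 2*x*y" by linarith
    moreover have "x^2 - 2*x*y \<le> (y-x)^2" by (simp add: power2_eq_square algebra_simps)
    ultimately show ?thesis unfolding e by simp
  qed
next
  case False
  show ?thesis
  proof (cases "y \<le> 0")
    case True
    with False have e: "(min y 0)^2 - (min x 0)^2 - 2 * min x 0 * (y - x) = y^2"
      by (simp add: min_def)
    have "(y-x)^2 = y^2 - 2*x*y + x^2" by (simp add: power2_eq_square algebra_simps)
    moreover have "x*y \<le> 0" using True False by (simp add: mult_nonneg_nonpos)
    moreover have "0 \<le> x^2" by simp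
    ultimately have "y^2 \<le> (y-x)^2" by linarith
    then show ?thesis unfolding e by simp
  next
    case False
    with \<open>\<not> x \<le> 0\<close> show ?thesis by (simp add: min_def)
  qed
qed

lemma deriv_negsq: "((\<lambda>x::real. (min x 0)^2) has_real_derivative 2 * min x 0) (at x)"
proof -
  have "((\<lambda>y. ((min y 0)^2 - (min x 0)^2) / (y - x) - 2 * min x 0) \<longlongrightarrow> 0) (at x)"
  proof (rule Lim_null_comparison)
    show "\<forall>\<^sub>F y in at x. norm (((min y 0)^2 - (min x 0)^2) / (y - x) - 2 * min x 0) \<le> \<bar>y - x\<bar>"
      unfolding eventually_at
    proof (intro exI[of _ 1] conjI ballI impI)
      fix y :: real assume "y \<noteq> x \<and> dist y x < 1"
      then have ne: "y - x \<noteq> 0" by auto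
      have "((min y 0)^2 - (min x 0)^2) / (y - x) - 2 * min x 0
          = ((min y 0)^2 - (min x 0)^2 - 2 * min x 0 * (y - x)) / (y - x)"
        using ne by (simp add: field_simps)
      also have "norm \<dots> \<le> (y - x)^2 / \<bar>y - x\<bar>"
        using negsq_quad[of y x] ne by (simp add: abs_divide divide_right_mono)
      also have "\<dots> = \<bar>y - x\<bar>" proof -
        have e: "(y-x)^2 = \<bar>y-x\<bar>*\<bar>y-x\<bar>" by (simp add: power2_eq_square)
        have "\<bar>y-x\<bar> \<noteq> 0" using ne by simp
        then show ?thesis unfolding e by (metis nonzero_mult_div_cancel_right)
      qed
      finally show "norm (((min y 0)^2 - (min x 0)^2) / (y - x) - 2 * min x 0) \<le> \<bar>y - x\<bar>" .
    qed simp
    show "((\<lambda>y. \<bar>y - x\<bar>) \<longlongrightarrow> 0) (at x)"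
      by (rule tendsto_rabs_zero, rule LIM_zero, rule tendsto_ident_at)
  qed
  then have "((\<lambda>y. ((min y 0)^2 - (min x 0)^2) / (y - x)) \<longlongrightarrow> 2 * min x 0) (at x)"
    by (simp add: LIM_zero_iff)
  then show ?thesis by (simp add: has_field_derivative_iff)
qed

lemma deriv_nonpos_mono:
  fixes f f' :: "real \<Rightarrow> real"
  assumes "a \<le> r" "\<And>x. x \<in> {a..r} \<Longrightarrow> (f has_real_derivative f' x) (at x within {a..r})"
    "\<And>x. x \<in> {a..r} \<Longrightarrow> f' x \<le> 0"
  shows "f r \<le> f a"
proof -
  have "(f' has_integral (f r - f a)) {a..r}"
    using fundamental_theorem_of_calculus[OF assms(1), of f f'] assms(2)
    by (simp add: has_real_derivative_iff_has_vector_derivative)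
  then have "((\<lambda>x. - f' x) has_integral - (f r - f a)) {a..r}" by (rule has_integral_neg)
  then have "0 \<le> - (f r - f a)" by (rule has_integral_nonneg) (use assms(3) in auto)
  then show ?thesis by simp
qed
lemma key_ineq:
  fixes lam D :: "nat \<Rightarrow> real" and d :: nat
  assumes d: "0 < d" and g: "0 \<le> g" and q: "0 \<le> q"
    and lam0: "\<And>i. i<d \<Longrightarrow> 0 \<le> lam i" and lamL: "\<And>i. i<d \<Longrightarrow> lam i \<le> Lb"
  shows "(\<Sum>i<d. 2 * min (D i) 0 * (- 2 * g * lam i * D i
            + 2 * q * lam i * ((1 / (2 * real d)) * (\<Sum>j<d. lam j * D j))))
         \<le> 2 * q * Lb^2 * (\<Sum>i<d. (min (D i) 0)^2)"
proof -
  define m where "m i = min (D i) 0" for i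
  define Rv where "Rv = (1 / (2 * real d)) * (\<Sum>j<d. lam j * D j)"
  define Sm where "Sm = (\<Sum>j<d. m j)"
  have m0: "m i \<le> 0" for i unfolding m_def by simp
  have Sm0: "Sm \<le> 0" unfolding Sm_def by (rule sum_nonpos) (simp add: m0)
  have Lb0: "0 \<le> Lb" using lam0[of 0] lamL[of 0] d by simp
  have mD: "0 \<le> m i * D i" for i unfolding m_def by (cases "D i \<le> 0") (auto simp: min_def mult_nonpos_nonpos)
  have h2: "(1 / (2 * real d)) * (\<Sum>j<d. lam j * m j) \<le> Rv"
    unfolding Rv_def using d
    by (intro mult_left_mono sum_mono) (auto simp: m_def intro!: mult_left_mono lam0)
  have h4: "(\<Sum>j<d. lam j * m j) * m i \<le> Lb * Sm * m i" for i
  proof -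
    have "(\<Sum>j<d. lam j * m j) * m i = (\<Sum>j<d. lam j * (m j * m i))"
      by (simp add: sum_distrib_right mult.assoc)
    also have "\<dots> \<le> (\<Sum>j<d. Lb * (m j * m i))"
      by (intro sum_mono mult_right_mono lamL) (auto simp: mult_nonpos_nonpos m0)
    also have "\<dots> = Lb * Sm * m i" by (simp add: Sm_def sum_distrib_left sum_distrib_right mult.assoc)
    finally show ?thesis .
  qed
  have trm: "2 * m i * (- 2 * g * lam i * D i + 2 * q * lam i * Rv)
        \<le> 2 * q * Lb^2 / real d * (m i * Sm)" if i: "i < d" for i
  proof -
    have t1: "2 * m i * (- 2 * g * lam i * D i) \<le> 0"
    proof -
      have "0 \<le> g * lam i * (m i * D i)" using g lam0[OF i] mD by simp
      then show ?thesis by (simp add: algebra_simps)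
    qed
    have "m i * Rv \<le> m i * ((1 / (2 * real d)) * (\<Sum>j<d. lam j * m j))"
      using mult_left_mono_neg[OF h2 m0[of i]] .
    also have "\<dots> = (1 / (2 * real d)) * ((\<Sum>j<d. lam j * m j) * m i)" by simp
    also have "\<dots> \<le> (1 / (2 * real d)) * (Lb * Sm * m i)"
      using h4 d by (intro mult_left_mono) auto
    finally have a: "m i * Rv \<le> (1 / (2 * real d)) * (Lb * (m i * Sm))" by (simp add: ac_simps)
    have "2 * m i * (2 * q * lam i * Rv) = 4 * q * lam i * (m i * Rv)" by simp
    also have "\<dots> \<le> 4 * q * lam i * ((1 / (2 * real d)) * (Lb * (m i * Sm)))"
      using a q lam0[OF i] by (intro mult_left_mono) auto
    also have "\<dots> \<le> 4 * q * Lb * ((1 / (2 * real d)) * (Lb * (m i * Sm)))"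
    proof (intro mult_right_mono mult_left_mono)
      show "0 \<le> 1 / (2 * real d) * (Lb * (m i * Sm))"
        using Lb0 m0 Sm0 by (simp add: mult_nonpos_nonpos)
    qed (use q lamL[OF i] in auto)
    also have "\<dots> = 2 * q * Lb^2 / real d * (m i * Sm)"
      by (simp add: power2_eq_square field_simps)
    finally have t2: "2 * m i * (2 * q * lam i * Rv) \<le> 2 * q * Lb^2 / real d * (m i * Sm)" .
    have "2 * m i * (- 2 * g * lam i * D i + 2 * q * lam i * Rv)
        = 2 * m i * (- 2 * g * lam i * D i) + 2 * m i * (2 * q * lam i * Rv)"
      by (simp add: algebra_simps)
    then show ?thesis using t1 t2 by linarith
  qed
  have "(\<Sum>i<d. 2 * m i * (- 2 * g * lam i * D i + 2 * q * lam i * Rv))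
        \<le> (\<Sum>i<d. 2 * q * Lb^2 / real d * (m i * Sm))"
    by (rule sum_mono) (rule trm, simp)
  also have "\<dots> = 2 * q * Lb^2 / real d * Sm^2"
    by (simp add: sum_distrib_left sum_distrib_right Sm_def power2_eq_square mult.commute)
  also have "\<dots> \<le> 2 * q * Lb^2 / real d * ((\<Sum>i<d. (m i)^2) * real d)"
    using sum_squared_le_sum_of_squares[of m "{..<d}"] q
    by (intro mult_left_mono) (auto simp: Sm_def)
  also have "\<dots> = 2 * q * Lb^2 * (\<Sum>i<d. (m i)^2)" using d by simp
  finally show ?thesis unfolding m_def Rv_def .
qed
lemma positivity:
  fixes lam :: "nat \<Rightarrow> real" and Dsq :: "nat \<Rightarrow> real \<Rightarrow> real" and d :: nat
  assumes d: "0 < d" and eta: "0 < eta" and b: "0 < b" and Lb: "0 \<le> Lb"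
    and lam0: "\<And>i. i<d \<Longrightarrow> 0 \<le> lam i" and lamL: "\<And>i. i<d \<Longrightarrow> lam i \<le> Lb"
    and trK0: "0 \<le> trK"
    and init: "\<And>i. i<d \<Longrightarrow> 0 \<le> Dsq i 0"
    and ode: "\<And>i t. i<d \<Longrightarrow> t \<ge> 0 \<Longrightarrow> (Dsq i has_real_derivative
        (- 2 * adagrad_norm_lr eta b trK d (risk d lam Dsq) t * lam i * Dsq i t
         + 2 * (adagrad_norm_lr eta b trK d (risk d lam Dsq) t)^2 * lam i * risk d lam Dsq t))
        (at t within {0..})"
  shows "\<forall>s\<ge>0. \<forall>i<d. 0 \<le> Dsq i s"
proof -
  define R where "R = risk d lam Dsq"
  define c where "c = 2 * trK / real d"
  define G where "G s = b^2 + c * integral {0..s} R" for s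
  define gam where "gam s = eta / sqrt (G s)" for s
  have gam_eq: "adagrad_norm_lr eta b trK d R s = gam s" for s
    unfolding adagrad_norm_lr_def gam_def G_def c_def by simp
  define D' where "D' i s = - 2 * gam s * lam i * Dsq i s + 2 * (gam s)^2 * lam i * R s" for i s
  have ode': "(Dsq i has_real_derivative D' i s) (at s within {0..})" if "i < d" "0 \<le> s" for i s
    using ode[OF that] gam_eq unfolding D'_def R_def by simp
  have c0: "0 \<le> c" unfolding c_def using trK0 by simp
  have contD: "continuous_on {0..} (Dsq i)" if "i < d" for i
    by (rule DERIV_continuous_on) (use ode' that in auto)
  have contR: "continuous_on {0..} R"
    unfolding R_def risk_def by (intro continuous_intros contD) auto
  have Gder: "(G has_real_derivative c * R s) (at s within {0..t1})" if "0 \<le> s" "s \<le> t1" for s t1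
  proof -
    have "continuous_on {0..t1} R" by (rule continuous_on_subset[OF contR]) auto
    from integral_has_real_derivative[OF this, of s] that
    have "((\<lambda>x. integral {0..x} R) has_real_derivative R s) (at s within {0..t1})" by simp
    then show ?thesis unfolding G_def by (auto intro!: derivative_eq_intros)
  qed
  define Phi where "Phi s = (\<Sum>i<d. (min (Dsq i s) 0)^2)" for s
  have Phider: "(Phi has_real_derivative (\<Sum>i<d. 2 * min (Dsq i s) 0 * D' i s)) (at s within {0..})"
    if "0 \<le> s" for s
    unfolding Phi_def
    by (rule DERIV_sum, rule DERIV_chain2[OF deriv_negsq ode'], use that in auto)
  have Phi_nn: "0 \<le> Phi s" for s unfolding Phi_def by (rule sum_nonneg) auto
  have Phi0: "Phi 0 = 0" unfolding Phi_def using init by (intro sum.neutral) auto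
  have contPhi: "continuous_on {0..} Phi"
    by (rule DERIV_continuous_on) (use Phider in auto)
  have Phi_zero: "0 \<le> Dsq i s" if "Phi s = 0" "i < d" for i s
  proof -
    have "\<forall>i\<in>{..<d}. (min (Dsq i s) 0)^2 = 0"
      using that(1) unfolding Phi_def by (subst sum_nonneg_eq_0_iff[symmetric]) auto
    then have "(min (Dsq i s) 0)^2 = 0" using that(2) by auto
    then show ?thesis by (cases "Dsq i s \<le> 0") (auto simp: min_def)
  qed
  have "Phi s = 0" if s0: "0 \<le> s" for s
  proof (rule ccontr)
    assume "Phi s \<noteq> 0"
    then have Pt1: "0 < Phi s" using Phi_nn[of s] by simp
    define t1 where "t1 = s"
    define B where "B = {r \<in> {0..t1}. 0 < Phi r}"
    have t1B: "t1 \<in> B" unfolding B_def t1_def using Pt1 s0 by auto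
    have bdd: "bdd_below B" unfolding B_def by (rule bdd_belowI[of _ 0]) auto
    define ss where "ss = Inf B"
    have ss_le: "ss \<le> t1" unfolding ss_def by (rule cInf_lower[OF t1B bdd])
    have ss_ge: "0 \<le> ss" unfolding ss_def using t1B by (intro cInf_greatest) (auto simp: B_def)
    have below: "Phi r = 0" if "0 \<le> r" "r < ss" for r
    proof (rule ccontr)
      assume "Phi r \<noteq> 0"
      then have "r \<in> B" unfolding B_def using that ss_le Phi_nn[of r] by auto
      then have "ss \<le> r" unfolding ss_def by (rule cInf_lower[OF _ bdd])
      then show False using that by simp
    qed
    have at_ss: "Phi ss = 0"
    proof (rule ccontr)
      assume "Phi ss \<noteq> 0"
      then have pos: "0 < Phi ss" using Phi_nn[of ss] by simp
      then have ss0: "ss \<noteq> 0" using Phi0 by auto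
      have "\<forall>\<epsilon>>0. \<exists>\<delta>>0. \<forall>x'\<in>{0..}. dist x' ss < \<delta> \<longrightarrow> dist (Phi x') (Phi ss) < \<epsilon>"
        using contPhi ss_ge unfolding continuous_on_iff by simp
      then obtain \<delta> where dl: "\<delta> > 0" and dlP: "\<forall>x'\<in>{0..}. dist x' ss < \<delta> \<longrightarrow> dist (Phi x') (Phi ss) < Phi ss"
        using pos by blast
      define r where "r = max 0 (ss - \<delta>/2)"
      have r: "0 \<le> r" "r < ss" "dist r ss < \<delta>" unfolding r_def using ss_ge ss0 dl
        by (auto simp: dist_real_def)
      then have "dist (Phi r) (Phi ss) < Phi ss" using dlP by auto
      moreover have "Phi r = 0" using below r by auto
      ultimately show False by (simp add: dist_real_def)
    qed
    have Dnn: "0 \<le> Dsq i r" if "0 \<le> r" "r \<le> ss" "i < d" for i r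
    proof (cases "r < ss")
      case True then show ?thesis using Phi_zero below that by blast
    next
      case False then have "r = ss" using that by simp
      then show ?thesis using Phi_zero at_ss that by blast
    qed
    have Rnn: "0 \<le> R r" if "0 \<le> r" "r \<le> ss" for r
      unfolding R_def risk_def using Dnn[OF that] lam0 d
      by (intro mult_nonneg_nonneg sum_nonneg) auto
    have "0 \<le> integral {0..ss} R"
      by (rule integral_nonneg, rule integrable_continuous_interval,
          rule continuous_on_subset[OF contR]) (use Rnn in auto)
    then have Gss: "b^2 \<le> G ss" unfolding G_def using c0 by simp
    have ss_lt: "ss < t1" using ss_le at_ss Pt1 unfolding t1_def by (cases "ss = s") auto
    have contG: "continuous_on {0..t1} G"
      by (rule DERIV_continuous_on, rule Gder) auto
    have "\<forall>\<epsilon>>0. \<exists>\<delta>>0. \<forall>x'\<in>{0..t1}. dist x' ss < \<delta> \<longrightarrow> dist (G x') (G ss) < \<epsilon>"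
      using contG ss_ge ss_le unfolding continuous_on_iff by simp
    moreover have "0 < b^2/2" using b by simp
    ultimately obtain \<delta> where dl: "\<delta> > 0" and dlG: "\<forall>x'\<in>{0..t1}. dist x' ss < \<delta> \<longrightarrow> dist (G x') (G ss) < b^2/2"
      by blast
    define e where "e = min (ss + \<delta>/2) t1"
    have e: "ss < e" "e \<le> t1" unfolding e_def using dl ss_lt by auto
    have Gpos: "b^2/2 < G r" if "ss \<le> r" "r \<le> e" for r
    proof -
      have "r \<in> {0..t1}" "dist r ss < \<delta>" using that e ss_ge dl unfolding e_def
        by (auto simp: dist_real_def)
      then have "dist (G r) (G ss) < b^2/2" using dlG by auto
      then show ?thesis using Gss by (simp add: dist_real_def abs_if split: if_splits)
    qed
    define \<kappa> where "\<kappa> = 4 * eta^2 * Lb^2 / b^2"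
    have Phibound: "(\<Sum>i<d. 2 * min (Dsq i r) 0 * D' i r) \<le> \<kappa> * Phi r"
      if "ss \<le> r" "r \<le> e" for r
    proof -
      have Gr: "0 < G r" proof -
        have "0 < b^2" using b by simp
        then show ?thesis using Gpos[OF that] by linarith
      qed
      have g0: "0 \<le> gam r" unfolding gam_def using eta Gr by simp
      have "(gam r)^2 = eta^2 / G r" unfolding gam_def using Gr by (simp add: power_divide)
      also have "\<dots> \<le> eta^2 / (b^2/2)"
        using Gpos[OF that] b Gr by (intro divide_left_mono) (auto intro: mult_pos_pos)
      finally have g2: "(gam r)^2 \<le> 2 * eta^2 / b^2" by (simp add: mult.commute)
      have "(\<Sum>i<d. 2 * min (Dsq i r) 0 * D' i r) \<le> 2 * (gam r)^2 * Lb^2 * Phi r"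
        unfolding D'_def Phi_def R_def risk_def
        by (rule key_ineq[OF d g0 _ lam0 lamL]) auto
      also have "\<dots> \<le> 2 * (2 * eta^2 / b^2) * Lb^2 * Phi r"
        using g2 Phi_nn[of r] by (intro mult_right_mono) auto
      also have "\<dots> = \<kappa> * Phi r" unfolding \<kappa>_def by simp
      finally show ?thesis .
    qed
    define psi where "psi r = Phi r * exp (- \<kappa> * r)" for r
    have psider: "(psi has_real_derivative
        ((\<Sum>i<d. 2 * min (Dsq i r) 0 * D' i r) * exp (- \<kappa> * r) + Phi r * (exp (- \<kappa> * r) * (- \<kappa>))))
        (at r within {ss..e})" if "r \<in> {ss..e}" for r
    proof -
      have "(Phi has_real_derivative (\<Sum>i<d. 2 * min (Dsq i r) 0 * D' i r)) (at r within {ss..e})"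
        by (rule has_field_derivative_subset[OF Phider]) (use that ss_ge in auto)
      moreover have "((\<lambda>r. - \<kappa> * r) has_real_derivative - \<kappa>) (at r within {ss..e})"
        using DERIV_cmult[OF DERIV_ident, of "- \<kappa>"] by simp
      then have "((\<lambda>r. exp (- \<kappa> * r)) has_real_derivative exp (- \<kappa> * r) * (- \<kappa>)) (at r within {ss..e})"
        by (rule DERIV_chain2[OF DERIV_exp])
      ultimately show ?thesis unfolding psi_def
        by (rule DERIV_cong[OF DERIV_mult]) (simp add: algebra_simps)
    qed
    have Phi_e: "Phi r = 0" if "r \<in> {ss..e}" for r
    proof -
      have "psi r \<le> psi ss"
      proof (rule deriv_nonpos_mono[where f = psi and a = ss and f' = "\<lambda>x. (\<Sum>i<d. 2 * min (Dsq i x) 0 * D' i x) * exp (- \<kappa> * x) + Phi x * (exp (- \<kappa> * x) * (- \<kappa>))"])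
        show "ss \<le> r" using that by simp
      next
        fix x assume x: "x \<in> {ss..r}"
        then have xr: "x \<in> {ss..e}" using that by auto
        show "(psi has_real_derivative (\<Sum>i<d. 2 * min (Dsq i x) 0 * D' i x) * exp (- \<kappa> * x) + Phi x * (exp (- \<kappa> * x) * (- \<kappa>))) (at x within {ss..r})"
          by (rule has_field_derivative_subset[OF psider[OF xr]]) (use that in auto)
      next
        fix x assume x: "x \<in> {ss..r}"
        then have xr: "x \<in> {ss..e}" using that by auto
        show "(\<Sum>i<d. 2 * min (Dsq i x) 0 * D' i x) * exp (- \<kappa> * x) + Phi x * (exp (- \<kappa> * x) * (- \<kappa>)) \<le> 0"
        proof -
          have "(\<Sum>i<d. 2 * min (Dsq i x) 0 * D' i x) * exp (- \<kappa> * x) + Phi x * (exp (- \<kappa> * x) * (- \<kappa>))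
              = exp (- \<kappa> * x) * ((\<Sum>i<d. 2 * min (Dsq i x) 0 * D' i x) - \<kappa> * Phi x)"
            by (simp add: algebra_simps)
          moreover have "(\<Sum>i<d. 2 * min (Dsq i x) 0 * D' i x) - \<kappa> * Phi x \<le> 0"
            using Phibound[of x] xr by simp
          ultimately show ?thesis by (simp add: mult_nonneg_nonpos)
        qed
      qed
      then have "Phi r * exp (- \<kappa> * r) \<le> 0" unfolding psi_def using at_ss by simp
      then have "Phi r \<le> 0" by (simp add: mult_le_0_iff)
      then show ?thesis using Phi_nn[of r] by simp
    qed
    have "e \<le> ss" unfolding ss_def
    proof (rule cInf_greatest)
      show "B \<noteq> {}" using t1B by auto
    next
      fix x assume "x \<in> B"
      then have x: "0 \<le> x" "x \<le> t1" "0 < Phi x" unfolding B_def by auto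
      show "e \<le> x"
      proof (rule ccontr)
        assume "\<not> e \<le> x"
        then show False using x below Phi_e using below[of x] Phi_e[of x] by (cases "x < ss") auto
      qed
    qed
    then show False using e by simp
  qed
  then show ?thesis using Phi_zero by blast
qed
lemma fixed_d_bound:
  fixes lam :: "nat \<Rightarrow> real" and Dsq :: "nat \<Rightarrow> real \<Rightarrow> real" and d :: nat
  assumes d: "0 < d" and eta: "0 < eta" and b: "0 < b" and Lb: "0 \<le> Lb"
    and lam0: "\<And>i. i<d \<Longrightarrow> 0 \<le> lam i" and lamL: "\<And>i. i<d \<Longrightarrow> lam i \<le> Lb"
    and trK: "trK = (\<Sum>i<d. lam i)"
    and init: "\<And>i. i<d \<Longrightarrow> 0 \<le> Dsq i 0"
    and F0: "(\<Sum>i<d. Dsq i 0) / real d \<le> F0"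
    and ode: "\<And>i t. i<d \<Longrightarrow> t \<ge> 0 \<Longrightarrow> (Dsq i has_real_derivative
        (- 2 * adagrad_norm_lr eta b trK d (risk d lam Dsq) t * lam i * Dsq i t
         + 2 * (adagrad_norm_lr eta b trK d (risk d lam Dsq) t)^2 * lam i * risk d lam Dsq t))
        (at t within {0..})"
    and t: "0 \<le> t"
  shows "eta / ((Lb * F0 + 2 * eta^2 * Lb * ln (1 + eta * Lb / b) + 4 * eta * b) / (2 * eta))
           \<le> adagrad_norm_lr eta b trK d (risk d lam Dsq) t"
proof -
  have trK0: "0 \<le> trK" unfolding trK by (rule sum_nonneg) (use lam0 in auto)
  have trKL: "trK \<le> real d * Lb" unfolding trK using sum_bounded_above[of "{..<d}" lam Lb] lamL by auto
  have pos: "\<forall>s\<ge>0. \<forall>i<d. 0 \<le> Dsq i s"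
    by (rule positivity[OF d eta b Lb lam0 lamL trK0 init ode]) auto
  define R where "R = risk d lam Dsq"
  define T where "T = trK / real d"
  define c where "c = 2 * trK / real d"
  define G where "G s = b^2 + c * integral {0..s} R" for s
  define gam where "gam s = eta / sqrt (G s)" for s
  have gam_eq: "adagrad_norm_lr eta b trK d R s = gam s" for s
    unfolding adagrad_norm_lr_def gam_def G_def c_def by simp
  define D' where "D' i s = - 2 * gam s * lam i * Dsq i s + 2 * (gam s)^2 * lam i * R s" for i s
  have ode': "(Dsq i has_real_derivative D' i s) (at s within {0..})" if "i < d" "0 \<le> s" for i s
    using ode[OF that] gam_eq unfolding D'_def R_def by simp
  have c0: "0 \<le> c" unfolding c_def using trK0 by simp
  have T0: "0 \<le> T" unfolding T_def using trK0 by simp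
  have TL: "T \<le> Lb" unfolding T_def using trKL d by (simp add: divide_le_eq mult.commute)
  have cT: "c = 2 * T" unfolding c_def T_def by simp
  have contD: "continuous_on {0..} (Dsq i)" if "i < d" for i
    by (rule DERIV_continuous_on) (use ode' that in auto)
  have contR: "continuous_on {0..} R"
    unfolding R_def risk_def by (intro continuous_intros contD) auto
  have Rnn: "0 \<le> R s" if "0 \<le> s" for s
    unfolding R_def risk_def using pos that lam0 d
    by (intro mult_nonneg_nonneg sum_nonneg) auto
  have Gder: "(G has_real_derivative c * R s) (at s within {0..t})" if "0 \<le> s" "s \<le> t" for s
  proof -
    have "continuous_on {0..t} R" by (rule continuous_on_subset[OF contR]) auto
    from integral_has_real_derivative[OF this, of s] that
    have "((\<lambda>x. integral {0..x} R) has_real_derivative R s) (at s within {0..t})" by simp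
    then show ?thesis unfolding G_def by (auto intro!: derivative_eq_intros)
  qed
  have Gge: "b^2 \<le> G s" if "0 \<le> s" for s
  proof -
    have "0 \<le> integral {0..s} R"
      by (rule integral_nonneg, rule integrable_continuous_interval,
          rule continuous_on_subset[OF contR]) (use Rnn in auto)
    then show ?thesis unfolding G_def using c0 by simp
  qed
  have Gpos: "0 < G s" if "0 \<le> s" for s
    using Gge[OF that] b by (smt (verit) zero_less_power)
  have G0: "G 0 = b^2" unfolding G_def by simp
  define F where "F s = (\<Sum>i<d. Dsq i s) / real d" for s
  define H where "H s = T * F s + 4 * eta * sqrt (G s) - 4 * eta * b - eta^2 * T * ln (G s)" for s
  have Hder: "(H has_real_derivative 0) (at s within {0..t})" if s: "s \<in> {0..t}" for s
  proof -
    have s0: "0 \<le> s" "s \<le> t" using s by auto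
    have Fd: "(F has_real_derivative (\<Sum>i<d. D' i s) / real d) (at s within {0..t})"
      unfolding F_def
      by (intro DERIV_cdivide DERIV_sum has_field_derivative_subset[OF ode']) (use s0 in auto)
    have Sd: "((\<lambda>x. sqrt (G x)) has_real_derivative inverse (sqrt (G s)) / 2 * (c * R s)) (at s within {0..t})"
      by (rule DERIV_chain2[OF DERIV_real_sqrt[OF Gpos[OF s0(1)]] Gder[OF s0]])
    have Ld: "((\<lambda>x. ln (G x)) has_real_derivative inverse (G s) * (c * R s)) (at s within {0..t})"
      by (rule DERIV_chain2[OF DERIV_ln[OF Gpos[OF s0(1)]] Gder[OF s0]])
    have Hd: "(H has_real_derivative T * ((\<Sum>i<d. D' i s) / real d) + 4 * eta * (inverse (sqrt (G s)) / 2 * (c * R s))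
                 - 0 - eta^2 * T * (inverse (G s) * (c * R s))) (at s within {0..t})"
      unfolding H_def
      by (intro DERIV_diff DERIV_add DERIV_cmult Fd Sd Ld DERIV_const) 
    define u where "u = sqrt (G s)"
    have u0: "0 < u" unfolding u_def using Gpos[OF s0(1)] by simp
    have Gu: "G s = u^2" unfolding u_def using Gpos[OF s0(1)] by simp
    have gu: "gam s = eta / u" unfolding gam_def u_def ..
    have sumLD: "(\<Sum>i<d. lam i * Dsq i s) = 2 * real d * R s"
      unfolding R_def risk_def using d by simp
    have sumD': "(\<Sum>i<d. D' i s) = - 2 * gam s * (\<Sum>i<d. lam i * Dsq i s) + 2 * (gam s)^2 * R s * trK"
    proof -
      have "(\<Sum>i<d. D' i s) = (\<Sum>i<d. (-2*gam s) * (lam i * Dsq i s)) + (\<Sum>i<d. (2*(gam s)^2*R s) * lam i)"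
        unfolding D'_def sum.distrib[symmetric] by (intro sum.cong) (auto simp: algebra_simps)
      also have "\<dots> = - 2 * gam s * (\<Sum>i<d. lam i * Dsq i s) + 2 * (gam s)^2 * R s * trK"
        unfolding trK sum_distrib_left[symmetric] by simp
      finally show ?thesis .
    qed
    have "T * ((\<Sum>i<d. D' i s) / real d) + 4 * eta * (inverse (sqrt (G s)) / 2 * (c * R s))
                 - eta^2 * T * (inverse (G s) * (c * R s)) = 0"
      unfolding sumD' sumLD cT gu Gu u_def[symmetric] T_def
      using d u0 by (simp add: field_simps power2_eq_square)
    then show ?thesis using Hd by simp
  qed
  obtain C where HC: "\<forall>x\<in>{0..t}. H x = C"
    using has_field_derivative_zero_constant[of "{0..t}" H] Hder by auto
  have Ht: "H t = H 0" using HC t by auto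
  define u where "u = sqrt (G t)"
  have u0: "0 < u" unfolding u_def using Gpos[OF t] by simp
  have ub: "b \<le> u" unfolding u_def using Gge[OF t] b by (metis real_sqrt_ge_abs1 abs_of_pos order_trans real_sqrt_le_mono real_sqrt_abs)
  have lnG: "ln (G t) = 2 * ln u" unfolding u_def using Gpos[OF t] by (simp add: ln_sqrt)
  have lnb: "ln (b^2) = 2 * ln b" using b by (simp add: ln_realpow)
  have Ft: "0 \<le> F t" unfolding F_def using pos t by (intro divide_nonneg_nonneg sum_nonneg) auto
  have F0': "F 0 \<le> F0" unfolding F_def using F0 .
  have "0 \<le> F 0" unfolding F_def using pos by (intro divide_nonneg_nonneg sum_nonneg) auto
  then have F0nn: "0 \<le> F0" using F0' by linarith
  have key: "4 * eta * (u - b) = T * F 0 - T * F t + 2 * eta^2 * T * (ln u - ln b)"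
    using Ht b unfolding H_def G0 u_def[symmetric] lnG lnb by (simp add: algebra_simps u_def)
  define N where "N = 1 + eta * Lb / b"
  have N1: "1 \<le> N" unfolding N_def using eta Lb b by simp
  have lnu: "ln u - ln b \<le> ln N + u / (b * N)"
  proof -
    have "ln u - ln b = ln N + ln (u / (b * N))"
      using u0 b N1 by (simp add: ln_div ln_mult)
    also have "ln (u / (b * N)) \<le> u / (b * N) - 1"
      using u0 b N1 by (intro ln_le_minus_one) simp
    finally show ?thesis by simp
  qed
  have lnN: "0 \<le> ln N" using N1 by simp
  have bN: "eta * T \<le> b * N"
  proof -
    have "b * N = b + eta * Lb" unfolding N_def using b by (simp add: field_simps)
    moreover have "eta * T \<le> eta * Lb" using TL eta by simp
    ultimately show ?thesis using b by linarith
  qed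
  have "4 * eta * (u - b) \<le> T * F0 + 2 * eta^2 * T * (ln N + u / (b * N))"
  proof -
    have "T * F 0 \<le> T * F0" using F0' T0 by (rule mult_left_mono)
    moreover have "0 \<le> T * F t" using T0 Ft by simp
    moreover have "2 * eta^2 * T * (ln u - ln b) \<le> 2 * eta^2 * T * (ln N + u / (b * N))"
      using lnu T0 by (intro mult_left_mono) auto
    ultimately show ?thesis using key by linarith
  qed
  also have "\<dots> = T * F0 + 2 * eta^2 * T * ln N + 2 * eta * u * ((eta * T) / (b * N))"
    by (simp add: algebra_simps power2_eq_square)
  also have "\<dots> \<le> Lb * F0 + 2 * eta^2 * Lb * ln N + 2 * eta * u * 1"
  proof -
    have "T * F0 \<le> Lb * F0" using TL F0nn by (rule mult_right_mono)
    moreover have "2 * eta^2 * T * ln N \<le> 2 * eta^2 * Lb * ln N"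
      using TL lnN by (intro mult_right_mono mult_left_mono) auto
    moreover have "(eta * T) / (b * N) \<le> 1" using bN b N1 by (simp add: divide_le_eq)
    then have "2 * eta * u * ((eta * T) / (b * N)) \<le> 2 * eta * u * 1"
      using eta u0 by (intro mult_left_mono) auto
    ultimately show ?thesis by linarith
  qed
  finally have "4 * eta * (u - b) \<le> Lb * F0 + 2 * eta^2 * Lb * ln N + 2 * eta * u * 1" .
  then have "2 * eta * u \<le> Lb * F0 + 2 * eta^2 * Lb * ln N + 4 * eta * b" by (simp add: algebra_simps)
  then have uU: "u \<le> (Lb * F0 + 2 * eta^2 * Lb * ln N + 4 * eta * b) / (2 * eta)"
    using eta by (simp add: le_divide_eq mult.commute)
  have "eta / ((Lb * F0 + 2 * eta^2 * Lb * ln N + 4 * eta * b) / (2 * eta)) \<le> eta / u"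
  proof (rule divide_left_mono)
    show "0 < (Lb * F0 + 2 * eta^2 * Lb * ln N + 4 * eta * b) / (2 * eta) * u"
      using uU u0 by (intro mult_pos_pos) auto
  qed (use uU eta in auto)
  also have "eta / u = adagrad_norm_lr eta b trK d (risk d lam Dsq) t"
    using gam_eq[of t] unfolding gam_def u_def R_def by simp
  finally show ?thesis unfolding N_def .
qed
lemma trace_eig:
  fixes K :: "real mat" and w :: "nat \<Rightarrow> real vec" and lam :: "nat \<Rightarrow> real"
  assumes K: "K \<in> carrier_mat d d"
    and wc: "\<And>i. i < d \<Longrightarrow> w i \<in> carrier_vec d"
    and orth: "\<And>i j. i < d \<Longrightarrow> j < d \<Longrightarrow> w i \<bullet> w j = (if i = j then 1 else 0)"
    and eig: "\<And>i. i < d \<Longrightarrow> K *\<^sub>v w i = lam i \<cdot>\<^sub>v w i"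
  shows "mat_trace K = (\<Sum>i<d. lam i)"
proof -
  define W where "W = mat d d (\<lambda>(i,k). w k $ i)"
  have Wc: "W \<in> carrier_mat d d" "transpose_mat W \<in> carrier_mat d d" unfolding W_def by auto
  have "transpose_mat W * W = 1\<^sub>m d"
  proof (rule eq_matI)
    fix k l assume kl: "k < dim_row (1\<^sub>m d)" "l < dim_col (1\<^sub>m d)"
    have "(transpose_mat W * W) $$ (k,l) = (\<Sum>i<d. w k $ i * w l $ i)"
      using kl unfolding W_def by (simp add: scalar_prod_def atLeast0LessThan)
    also have "\<dots> = w k \<bullet> w l" using wc[of l] kl unfolding scalar_prod_def by (simp add: atLeast0LessThan)
    also have "\<dots> = 1\<^sub>m d $$ (k,l)" using orth kl by simp
    finally show "(transpose_mat W * W) $$ (k,l) = 1\<^sub>m d $$ (k,l)" .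
  qed (use Wc in auto)
  then have WW: "W * transpose_mat W = 1\<^sub>m d"
    using mat_mult_left_right_inverse[OF Wc(2) Wc(1)] by simp
  have delta: "(\<Sum>k<d. w k $ i * w k $ j) = (if i = j then 1 else 0)" if "i < d" "j < d" for i j
  proof -
    have "(\<Sum>k<d. w k $ i * w k $ j) = (W * transpose_mat W) $$ (i,j)"
      using that unfolding W_def by (simp add: scalar_prod_def atLeast0LessThan)
    then show ?thesis using WW that by simp
  qed
  have Kw: "(K *\<^sub>v w k) $ i = (\<Sum>j<d. K $$ (i,j) * w k $ j)" if "i < d" "k < d" for i k
  proof -
    have "dim_vec (w k) = d" using wc[OF that(2)] by auto
    then show ?thesis using that K by (simp add: scalar_prod_def atLeast0LessThan)
  qed
  have lamk: "lam k = (\<Sum>i<d. w k $ i * (K *\<^sub>v w k) $ i)" if "k < d" for k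
  proof -
    have "w k \<bullet> (K *\<^sub>v w k) = lam k * (w k \<bullet> w k)"
      using eig[OF that] wc[OF that] by simp
    also have "\<dots> = lam k" using orth[OF that that] by simp
    moreover have "dim_vec (w k) = d" "dim_vec (K *\<^sub>v w k) = d" using wc[OF that] K by auto
    ultimately show ?thesis unfolding scalar_prod_def by (simp add: atLeast0LessThan)
  qed
  have "(\<Sum>k<d. lam k) = (\<Sum>k<d. \<Sum>i<d. \<Sum>j<d. w k $ i * K $$ (i,j) * w k $ j)"
    by (rule sum.cong, simp, simp add: lamk Kw sum_distrib_left mult.assoc)
  also have "\<dots> = (\<Sum>i<d. \<Sum>j<d. K $$ (i,j) * (\<Sum>k<d. w k $ i * w k $ j))"
    by (subst sum.swap, rule sum.cong, simp, subst sum.swap, rule sum.cong, simp,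
        simp add: sum_distrib_left algebra_simps)
  also have "\<dots> = (\<Sum>i<d. K $$ (i,i))"
    by (rule sum.cong, simp, simp add: delta if_distrib sum.delta cong: if_cong)
  finally show ?thesis using K unfolding mat_trace_def by simp
qed

theorem proposition4:
  fixes K :: "nat \<Rightarrow> real mat"
    and Xstar X0 :: "nat \<Rightarrow> real vec"
    and lam :: "nat \<Rightarrow> nat \<Rightarrow> real"
    and w :: "nat \<Rightarrow> nat \<Rightarrow> real vec"
    and Dsq :: "nat \<Rightarrow> nat \<Rightarrow> real \<Rightarrow> real"
    and eta b L C :: real
  assumes eta_pos: "eta > 0" and b_pos: "b > 0"
    and K_carrier: "\<And>d. K d \<in> carrier_mat d d"
    and K_sym: "\<And>d. transpose_mat (K d) = K d"
    and K_psd: "\<And>d x. x \<in> carrier_vec d \<Longrightarrow> x \<bullet> (K d *\<^sub>v x) \<ge> 0"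
    and K_opnorm: "\<And>d x. x \<in> carrier_vec d \<Longrightarrow>
                     (K d *\<^sub>v x) \<bullet> (K d *\<^sub>v x) \<le> L\<^sup>2 * (x \<bullet> x)"
    and eig_carrier: "\<And>d i. i < d \<Longrightarrow> w d i \<in> carrier_vec d"
    and eig_orthonormal: "\<And>d i j. i < d \<Longrightarrow> j < d \<Longrightarrow>
                     w d i \<bullet> w d j = (if i = j then 1 else 0)"
    and eig_pair: "\<And>d i. i < d \<Longrightarrow> K d *\<^sub>v w d i = lam d i \<cdot>\<^sub>v w d i"
    and Xstar_carrier: "\<And>d. Xstar d \<in> carrier_vec d"
    and C_pos: "C > 0"
    and few_small_eigs:
      "((\<lambda>d. real (card {i. i < d \<and> lam d i < C}) / real d) \<longlongrightarrow> 0) sequentially"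
    and Xstar_coords: "\<exists>M. \<forall>\<^sub>F d in sequentially. \<forall>i<d. \<bar>Xstar d \<bullet> w d i\<bar> \<le> M / sqrt (real d)"
    and X0_zero: "\<And>d. X0 d = 0\<^sub>v d"
    and D_init: "\<And>d i. 0 < d \<Longrightarrow> i < d \<Longrightarrow>
                   Dsq d i 0 = real d * ((X0 d - Xstar d) \<bullet> w d i)\<^sup>2"
    and D_ode: "\<And>d i t. 0 < d \<Longrightarrow> i < d \<Longrightarrow> t \<ge> 0 \<Longrightarrow>
          (Dsq d i has_real_derivative
             (- 2 * adagrad_norm_lr eta b (mat_trace (K d)) d (risk d (lam d) (Dsq d)) t
                  * lam d i * Dsq d i t
              + 2 * (adagrad_norm_lr eta b (mat_trace (K d)) d (risk d (lam d) (Dsq d)) t)\<^sup>2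
                  * lam d i * risk d (lam d) (Dsq d) t)) (at t within {0..})"
  shows "\<exists>g. g > 0 \<and> (\<forall>\<^sub>F d in sequentially. \<forall>t>0.
            adagrad_norm_lr eta b (mat_trace (K d)) d (risk d (lam d) (Dsq d)) t > g)"
proof -
  obtain M where HM: "\<forall>\<^sub>F d in sequentially. \<forall>i<d. \<bar>Xstar d \<bullet> w d i\<bar> \<le> M / sqrt (real d)"
    using Xstar_coords by blast
  define Lb where "Lb = \<bar>L\<bar>"
  define U where "U = (Lb * M^2 + 2 * eta^2 * Lb * ln (1 + eta * Lb / b) + 4 * eta * b) / (2 * eta)"
  have Lb0: "0 \<le> Lb" unfolding Lb_def by simp
  have "0 \<le> ln (1 + eta * Lb / b)" using eta_pos b_pos Lb0 by simp
  then have "0 < Lb * M^2 + 2 * eta^2 * Lb * ln (1 + eta * Lb / b) + 4 * eta * b"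
    using Lb0 eta_pos b_pos by (intro add_nonneg_pos add_nonneg_nonneg mult_nonneg_nonneg) auto
  then have U0: "0 < U" unfolding U_def using eta_pos by simp
  define g where "g = eta / U / 2"
  have g0: "0 < g" unfolding g_def using U0 eta_pos by simp
  have "\<forall>\<^sub>F d in sequentially. \<forall>t>0.
            adagrad_norm_lr eta b (mat_trace (K d)) d (risk d (lam d) (Dsq d)) t > g"
    using eventually_conj[OF HM eventually_gt_at_top[of 0]]
  proof (rule eventually_mono)
    fix d :: nat
    assume A: "(\<forall>i<d. \<bar>Xstar d \<bullet> w d i\<bar> \<le> M / sqrt (real d)) \<and> 0 < d"
    then have d: "0 < d" and Xb: "\<And>i. i < d \<Longrightarrow> \<bar>Xstar d \<bullet> w d i\<bar> \<le> M / sqrt (real d)" by auto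
    have lamq: "w d i \<bullet> (K d *\<^sub>v w d i) = lam d i" if "i < d" for i
      using eig_pair[OF that] eig_carrier[OF that] eig_orthonormal[OF that that] by simp
    have lam0: "0 \<le> lam d i" if "i < d" for i
      using K_psd[OF eig_carrier[OF that]] lamq[OF that] by simp
    have lamL: "lam d i \<le> Lb" if "i < d" for i
    proof -
      have "(K d *\<^sub>v w d i) \<bullet> (K d *\<^sub>v w d i) = (lam d i)^2"
        using eig_pair[OF that] eig_carrier[OF that] eig_orthonormal[OF that that]
        by (simp add: power2_eq_square)
      moreover have "w d i \<bullet> w d i = 1" using eig_orthonormal[OF that that] by simp
      ultimately have "(lam d i)^2 \<le> L^2" using K_opnorm[OF eig_carrier[OF that]] by simp
      then have "\<bar>lam d i\<bar> \<le> \<bar>L\<bar>" by (simp add: abs_le_square_iff)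
      then show ?thesis unfolding Lb_def by simp
    qed
    have trK: "mat_trace (K d) = (\<Sum>i<d. lam d i)"
      by (rule trace_eig[OF K_carrier eig_carrier eig_orthonormal eig_pair])
    have Dform: "Dsq d i 0 = real d * (Xstar d \<bullet> w d i)^2" if "i < d" for i
    proof -
      have "(X0 d - Xstar d) \<bullet> w d i = X0 d \<bullet> w d i - Xstar d \<bullet> w d i"
        by (rule minus_scalar_prod_distrib[of _ d]) (use X0_zero Xstar_carrier eig_carrier[OF that] in auto)
      also have "X0 d \<bullet> w d i = 0" using X0_zero eig_carrier[OF that] by simp
      finally show ?thesis using D_init[OF d that] by (simp add: power2_eq_square)
    qed
    have init: "0 \<le> Dsq d i 0" if "i < d" for i using Dform[OF that] by simp
    have Dle: "Dsq d i 0 \<le> M^2" if "i < d" for i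
    proof -
      have "(Xstar d \<bullet> w d i)^2 \<le> (M / sqrt (real d))^2"
        using Xb[OF that] by (metis abs_le_square_iff abs_of_nonneg abs_ge_zero order_trans)
      also have "\<dots> = M^2 / real d" using d by (simp add: power_divide)
      finally have "real d * (Xstar d \<bullet> w d i)^2 \<le> real d * (M^2 / real d)"
        using d by (intro mult_left_mono) auto
      then show ?thesis using Dform[OF that] d by simp
    qed
    have F0: "(\<Sum>i<d. Dsq d i 0) / real d \<le> M^2"
    proof -
      have "(\<Sum>i<d. Dsq d i 0) \<le> real d * M^2"
        using sum_bounded_above[of "{..<d}" "\<lambda>i. Dsq d i 0" "M^2"] Dle by auto
      then show ?thesis using d by (simp add: divide_le_eq mult.commute)
    qed
    have ode: "\<And>i t. i<d \<Longrightarrow> t \<ge> 0 \<Longrightarrow> (Dsq d i has_real_derivative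
        (- 2 * adagrad_norm_lr eta b (mat_trace (K d)) d (risk d (lam d) (Dsq d)) t * lam d i * Dsq d i t
         + 2 * (adagrad_norm_lr eta b (mat_trace (K d)) d (risk d (lam d) (Dsq d)) t)^2 * lam d i * risk d (lam d) (Dsq d) t))
        (at t within {0..})"
      using D_ode[OF d] by blast
    show "\<forall>t>0. adagrad_norm_lr eta b (mat_trace (K d)) d (risk d (lam d) (Dsq d)) t > g"
    proof (intro allI impI)
      fix t :: real assume "0 < t"
      have "eta / U \<le> adagrad_norm_lr eta b (mat_trace (K d)) d (risk d (lam d) (Dsq d)) t"
        unfolding U_def
        by (rule fixed_d_bound[OF d eta_pos b_pos Lb0 lam0 lamL trK init F0 ode]) (use \<open>0 < t\<close> in auto)
      moreover have "g < eta / U"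
      proof -
        have "0 < eta / U" using U0 eta_pos by simp
        then show ?thesis unfolding g_def by (simp add: field_simps)
      qed
      ultimately show "adagrad_norm_lr eta b (mat_trace (K d)) d (risk d (lam d) (Dsq d)) t > g" by simp
    qed
  qed
  then show ?thesis using g0 by blast
qed

end
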